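(* Let $\langle A,\to\rangle$ be a conditional algebra and $Y$ a closed subset of the Stone space $\mathrm{Ul}(A)$. Then $\theta(Y)=\{(a,b)\in A^2: Y\cap\varphi(a)=Y\cap\varphi(b)\}$ is a congruence of $\langle A,\to\rangle$ if and only if $Y$ is a $T_A$-closed set.
   Context: A conditional algebra is $\langle A,\to\rangle$ with $A$ a Boolean algebra and $\to$ binary with $a\to1=1$, $(a\to b)\wedge(a\to c)=a\to(b\wedge c)$, $(a\vee b)\to c\le(a\to c)\wedge(b\to c)$. $\mathrm{Ul}(A)$ is the Stone space of ultrafilters, $\varphi(a)=\{u:a\in u\}$; closed sets are $\varphi(F)=\{u:F\subseteq u\}$ for filters $F$ (including $F=A$). $D^{\to}_u(F)=\{b:\exists a\in F,\ a\to b\in u\}$; $T_A(u,Z,v)$ iff there is a filter $F$ with $Z=\varphi(F)$ and $D^{\to}_u(F)\subseteq v$. For $x,y\in\mathrm{Ul}(A)$, $\mathbf{C}(x,y)$ is the set of closed $Z$ with $T_A(x,Z,y)$. A closed set $Y$ is $T_A$-closed if for all $x,y$: if $x\in Y$ and $Z$ is a minimal element (w.r.t. inclusion) of $\mathbf{C}(x,y)$, then $Z\subseteq Y$ and $y\in Y$. *)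

theory Defs
  imports Main
begin

definition conditional_algebra :: "('a::boolean_algebra \<Rightarrow> 'a \<Rightarrow> 'a) \<Rightarrow> bool" where
  "conditional_algebra imp \<longleftrightarrow>
     (\<forall>a. imp a top = top) \<and>
     (\<forall>a b c. inf (imp a b) (imp a c) = imp a (inf b c)) \<and>
     (\<forall>a b c. imp (sup a b) c \<le> inf (imp a c) (imp b c))"

text \<open>Filters of a Boolean algebra (the improper filter UNIV is allowed).\<close>
definition ba_filter :: "'a::boolean_algebra set \<Rightarrow> bool" where
  "ba_filter F \<longleftrightarrow> top \<in> F \<and> (\<forall>a\<in>F. \<forall>b\<in>F. inf a b \<in> F) \<and> (\<forall>a\<in>F. \<forall>b. a \<le> b \<longrightarrow> b \<in> F)"

definition ultrafilter :: "'a::boolean_algebra set \<Rightarrow> bool" where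
  "ultrafilter u \<longleftrightarrow> ba_filter u \<and> u \<noteq> UNIV \<and>
     (\<forall>G. ba_filter G \<and> G \<noteq> UNIV \<and> u \<subseteq> G \<longrightarrow> G = u)"

definition Ul :: "'a::boolean_algebra set set" where
  "Ul = {u. ultrafilter u}"

definition phi :: "'a::boolean_algebra \<Rightarrow> 'a set set" where
  "phi a = {u \<in> Ul. a \<in> u}"

definition phiF :: "'a::boolean_algebra set \<Rightarrow> 'a set set" where
  "phiF F = {u \<in> Ul. F \<subseteq> u}"

text \<open>Closed subsets of the Stone space: exactly the sets phiF F for filters F.\<close>
definition stone_closed :: "'a::boolean_algebra set set \<Rightarrow> bool" where
  "stone_closed Z \<longleftrightarrow> (\<exists>F. ba_filter F \<and> Z = phiF F)"

definition D_imp :: "('a::boolean_algebra \<Rightarrow> 'a \<Rightarrow> 'a) \<Rightarrow> 'a set \<Rightarrow> 'a set \<Rightarrow> 'a set" where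
  "D_imp imp u F = {b. \<exists>a\<in>F. imp a b \<in> u}"

definition T_A :: "('a::boolean_algebra \<Rightarrow> 'a \<Rightarrow> 'a) \<Rightarrow> 'a set \<Rightarrow> 'a set set \<Rightarrow> 'a set \<Rightarrow> bool" where
  "T_A imp u Z v \<longleftrightarrow> (\<exists>F. ba_filter F \<and> Z = phiF F \<and> D_imp imp u F \<subseteq> v)"

definition C_set :: "('a::boolean_algebra \<Rightarrow> 'a \<Rightarrow> 'a) \<Rightarrow> 'a set \<Rightarrow> 'a set \<Rightarrow> 'a set set set" where
  "C_set imp x y = {Z. stone_closed Z \<and> T_A imp x Z y}"

definition minimal_in :: "'b set \<Rightarrow> 'b set set \<Rightarrow> bool" where
  "minimal_in Z S \<longleftrightarrow> Z \<in> S \<and> (\<forall>W\<in>S. W \<subseteq> Z \<longrightarrow> W = Z)"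

definition T_closed :: "('a::boolean_algebra \<Rightarrow> 'a \<Rightarrow> 'a) \<Rightarrow> 'a set set \<Rightarrow> bool" where
  "T_closed imp Y \<longleftrightarrow> stone_closed Y \<and>
     (\<forall>x\<in>Ul. \<forall>y\<in>Ul. \<forall>Z. x \<in> Y \<and> minimal_in Z (C_set imp x y) \<longrightarrow> Z \<subseteq> Y \<and> y \<in> Y)"

definition theta :: "'a::boolean_algebra set set \<Rightarrow> ('a \<times> 'a) set" where
  "theta Y = {(a, b). Y \<inter> phi a = Y \<inter> phi b}"

definition ca_congruence :: "('a::boolean_algebra \<Rightarrow> 'a \<Rightarrow> 'a) \<Rightarrow> ('a \<times> 'a) set \<Rightarrow> bool" where
  "ca_congruence imp \<theta> \<longleftrightarrow> equiv UNIV \<theta> \<and>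
     (\<forall>a b c d. (a, b) \<in> \<theta> \<and> (c, d) \<in> \<theta> \<longrightarrow>
        (inf a c, inf b d) \<in> \<theta> \<and> (sup a c, sup b d) \<in> \<theta> \<and> (imp a c, imp b d) \<in> \<theta>) \<and>
     (\<forall>a b. (a, b) \<in> \<theta> \<longrightarrow> (- a, - b) \<in> \<theta>)"

end

theory Submission
  imports Defs
begin

lemma filter_top: "ba_filter F \<Longrightarrow> top \<in> F" by (simp add: ba_filter_def)
lemma filter_inf: "ba_filter F \<Longrightarrow> a \<in> F \<Longrightarrow> b \<in> F \<Longrightarrow> inf a b \<in> F" by (simp add: ba_filter_def)
lemma filter_up: "ba_filter F \<Longrightarrow> a \<in> F \<Longrightarrow> a \<le> b \<Longrightarrow> b \<in> F" by (auto simp add: ba_filter_def)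
lemma filter_inf_iff: "ba_filter F \<Longrightarrow> inf a b \<in> F \<longleftrightarrow> a \<in> F \<and> b \<in> F"
  by (meson filter_inf filter_up inf.cobounded1 inf.cobounded2)

definition gen :: "'a::boolean_algebra set \<Rightarrow> 'a \<Rightarrow> 'a set" where
  "gen M e = {z. \<exists>m\<in>M. inf m e \<le> z}"

lemma gen_filter: assumes "ba_filter M" shows "ba_filter (gen M e)"
  unfolding ba_filter_def
proof (intro conjI ballI allI impI)
  have "inf top e \<le> top" by simp
  then show "top \<in> gen M e" using filter_top[OF assms] unfolding gen_def by blast
next
  fix a b assume "a \<in> gen M e" "b \<in> gen M e"
  then obtain m1 m2 where m: "m1 \<in> M" "inf m1 e \<le> a" "m2 \<in> M" "inf m2 e \<le> b" by (auto simp: gen_def)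
  have 1: "inf (inf m1 m2) e \<le> inf m1 e" by (rule inf_mono) simp_all
  have 2: "inf (inf m1 m2) e \<le> inf m2 e" by (rule inf_mono) simp_all
  have "inf (inf m1 m2) e \<le> inf a b" using le_infI[OF order_trans[OF 1 m(2)] order_trans[OF 2 m(4)]] .
  then show "inf a b \<in> gen M e" using filter_inf[OF assms m(1,3)] unfolding gen_def by blast
next
  fix a b assume "a \<in> gen M e" "a \<le> b"
  then show "b \<in> gen M e" unfolding gen_def using order_trans by blast
qed

lemma gen_sup: "ba_filter M \<Longrightarrow> M \<subseteq> gen M e \<and> e \<in> gen M e"
  proof
  assume f: "ba_filter M"
  show "M \<subseteq> gen M e" unfolding gen_def using inf_le1 by blast
  have "inf top e \<le> e" by simp
  then show "e \<in> gen M e" unfolding gen_def using filter_top[OF f] by blast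
qed

lemma uf_prime: assumes "ultrafilter u" shows "e \<in> u \<or> - e \<in> u"
proof (rule ccontr)
  assume n: "\<not> (e \<in> u \<or> - e \<in> u)"
  have f: "ba_filter u" "u \<noteq> UNIV" using assms by (auto simp: ultrafilter_def)
  have "gen u e = u \<or> gen u e = UNIV" using assms gen_filter[OF f(1)] gen_sup[OF f(1)]
    unfolding ultrafilter_def by blast
  moreover have "gen u e \<noteq> u" using gen_sup[OF f(1), of e] n by auto
  ultimately have "bot \<in> gen u e" by auto
  then obtain m where "m \<in> u" "inf m e \<le> bot" by (auto simp: gen_def)
  then have "inf m e = bot" using bot_unique by blast
  then have "m \<le> - e" by (simp add: inf_shunt)
  then show False using n f(1) \<open>m \<in> u\<close> filter_up by blast
qed

lemma uf_notboth: assumes "ultrafilter u" "e \<in> u" "- e \<in> u" shows False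
proof -
  have f: "ba_filter u" "u \<noteq> UNIV" using assms by (auto simp: ultrafilter_def)
  have "bot \<in> u" using filter_inf[OF f(1) assms(2,3)] by simp
  then have "u = UNIV" using f(1) filter_up[OF f(1)] by (metis UNIV_eq_I bot.extremum)
  then show False using f by simp
qed

lemma uf_compl: "ultrafilter u \<Longrightarrow> - e \<in> u \<longleftrightarrow> e \<notin> u"
  using uf_prime uf_notboth by blast

lemma uf_sup: assumes "ultrafilter u" shows "sup a b \<in> u \<longleftrightarrow> a \<in> u \<or> b \<in> u"
proof -
  have f: "ba_filter u" using assms by (auto simp: ultrafilter_def)
  show ?thesis
  proof
    assume "sup a b \<in> u"
    show "a \<in> u \<or> b \<in> u"
    proof (rule ccontr)
      assume "\<not> (a \<in> u \<or> b \<in> u)"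
      then have "- a \<in> u" "- b \<in> u" using uf_compl[OF assms] by auto
      then have "- sup a b \<in> u" using filter_inf[OF f] by simp
      then show False using \<open>sup a b \<in> u\<close> uf_compl[OF assms] by blast
    qed
  next
    assume "a \<in> u \<or> b \<in> u"
    then show "sup a b \<in> u" using filter_up[OF f] sup_ge1 sup_ge2 by metis
  qed
qed
lemma uf_filter: "ultrafilter u \<Longrightarrow> ba_filter u" by (simp add: ultrafilter_def)

lemma chain_union_filter:
  assumes "C \<noteq> {}" "\<forall>X\<in>C. ba_filter X" "\<forall>X\<in>C. \<forall>Y\<in>C. X \<subseteq> Y \<or> Y \<subseteq> X"
  shows "ba_filter (\<Union>C)"
  unfolding ba_filter_def
proof (intro conjI ballI allI impI)
  obtain X where "X \<in> C" using assms(1) by blast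
  then show "top \<in> \<Union>C" using assms(2) filter_top by blast
next
  fix a b assume "a \<in> \<Union>C" "b \<in> \<Union>C"
  then obtain X1 X2 where x: "X1 \<in> C" "a \<in> X1" "X2 \<in> C" "b \<in> X2" by blast
  show "inf a b \<in> \<Union>C"
  proof (cases "X1 \<subseteq> X2")
    case True
    then have "inf a b \<in> X2" using x assms(2) filter_inf by blast
    then show ?thesis using x by blast
  next
    case False
    then have "X2 \<subseteq> X1" using assms(3) x by blast
    then have "inf a b \<in> X1" using x assms(2) filter_inf by blast
    then show ?thesis using x by blast
  qed
next
  fix a b assume "a \<in> \<Union>C" "a \<le> b"
  then show "b \<in> \<Union>C" using assms(2) filter_up by blast
qed

lemma split_le: "inf m1 e \<le> a \<Longrightarrow> inf m2 (- e) \<le> a \<Longrightarrow> inf m1 m2 \<le> (a::'a::boolean_algebra)"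
proof -
  assume h: "inf m1 e \<le> a" "inf m2 (- e) \<le> a"
  have "inf m1 m2 = sup (inf (inf m1 m2) e) (inf (inf m1 m2) (- e))"
    by (metis inf_sup_distrib1 sup_compl_top inf_top_right)
  also have "\<dots> \<le> a"
  proof (rule sup_least)
    have "inf (inf m1 m2) e \<le> inf m1 e" by (rule inf_mono) simp_all
    then show "inf (inf m1 m2) e \<le> a" using h(1) by (rule order_trans)
    have "inf (inf m1 m2) (- e) \<le> inf m2 (- e)" by (rule inf_mono) simp_all
    then show "inf (inf m1 m2) (- e) \<le> a" using h(2) by (rule order_trans)
  qed
  finally show ?thesis .
qed

lemma uf_exists:
  assumes F: "ba_filter F" and a: "a \<notin> F"
  shows "\<exists>u. ultrafilter u \<and> F \<subseteq> u \<and> a \<notin> u"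
proof -
  define S where "S = {G. ba_filter G \<and> F \<subseteq> G \<and> a \<notin> G}"
  have "S \<noteq> {}" using F a unfolding S_def by blast
  moreover have "\<Union>C \<in> S" if "C \<noteq> {}" "subset.chain S C" for C
  proof -
    have c: "C \<subseteq> S" "\<forall>X\<in>C. \<forall>Y\<in>C. X \<subseteq> Y \<or> Y \<subseteq> X"
      using that(2) unfolding subset.chain_def by blast+
    have "ba_filter (\<Union>C)" using chain_union_filter[OF that(1)] c unfolding S_def by blast
    moreover have "F \<subseteq> \<Union>C" using c(1) that(1) unfolding S_def by blast
    moreover have "a \<notin> \<Union>C" using c(1) unfolding S_def by blast
    ultimately show ?thesis unfolding S_def by blast
  qed
  ultimately obtain M where M: "M \<in> S" and mx: "\<forall>X\<in>S. M \<subseteq> X \<longrightarrow> X = M"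
    using subset_Zorn_nonempty[of S] by blast
  have Mf: "ba_filter M" "F \<subseteq> M" "a \<notin> M" using M unfolding S_def by blast+
  have ina: "\<exists>m\<in>M. inf m e \<le> a" if "e \<notin> M" for e
  proof (rule ccontr)
    assume "\<not> (\<exists>m\<in>M. inf m e \<le> a)"
    then have "a \<notin> gen M e" unfolding gen_def by blast
    then have "gen M e \<in> S" using gen_filter[OF Mf(1)] gen_sup[OF Mf(1)] Mf(2) unfolding S_def by blast
    then have "gen M e = M" using mx gen_sup[OF Mf(1)] by blast
    then show False using that gen_sup[OF Mf(1), of e] by blast
  qed
  have prime: "e \<in> M \<or> - e \<in> M" for e
  proof (rule ccontr)
    assume "\<not> (e \<in> M \<or> - e \<in> M)"
    then obtain m1 m2 where "m1 \<in> M" "inf m1 e \<le> a" "m2 \<in> M" "inf m2 (- e) \<le> a"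
      using ina by meson
    then have "inf m1 m2 \<in> M" "inf m1 m2 \<le> a" using filter_inf[OF Mf(1)] split_le by blast+
    then show False using Mf filter_up by blast
  qed
  have "ultrafilter M"
    unfolding ultrafilter_def
  proof (intro conjI allI impI)
    show "ba_filter M" by (rule Mf(1))
    show "M \<noteq> UNIV" using Mf(3) by blast
    fix G assume G: "ba_filter G \<and> G \<noteq> UNIV \<and> M \<subseteq> G"
    show "G = M"
    proof (rule ccontr)
      assume "G \<noteq> M"
      then obtain g where "g \<in> G" "g \<notin> M" using G by blast
      then have "- g \<in> G" using prime G by blast
      then have "bot \<in> G" using filter_inf[of G g "- g"] G \<open>g \<in> G\<close> by simp
      then have "G = UNIV" using G filter_up[of G bot] by (metis UNIV_eq_I bot.extremum)
      then show False using G by blast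
    qed
  qed
  then show ?thesis using Mf by blast
qed

lemma reflect:
  assumes "ba_filter F" "phiF F \<subseteq> phi a" shows "a \<in> F"
proof (rule ccontr)
  assume "a \<notin> F"
  then obtain u where u: "ultrafilter u" "F \<subseteq> u" "a \<notin> u" using uf_exists assms(1) by blast
  then have "u \<in> phiF F" unfolding phiF_def Ul_def by blast
  then show False using assms(2) u(3) unfolding phi_def by blast
qed

lemma max_filter:
  assumes "ba_filter F0" "D_imp imp x F0 \<subseteq> y"
  shows "\<exists>F. ba_filter F \<and> F0 \<subseteq> F \<and> D_imp imp x F \<subseteq> y \<and>
     (\<forall>F'. ba_filter F' \<and> F \<subseteq> F' \<and> D_imp imp x F' \<subseteq> y \<longrightarrow> F' = F)"
proof -
  define S where "S = {G. ba_filter G \<and> F0 \<subseteq> G \<and> D_imp imp x G \<subseteq> y}"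
  have "S \<noteq> {}" using assms unfolding S_def by blast
  moreover have "\<Union>C \<in> S" if "C \<noteq> {}" "subset.chain S C" for C
  proof -
    have c: "C \<subseteq> S" "\<forall>X\<in>C. \<forall>Y\<in>C. X \<subseteq> Y \<or> Y \<subseteq> X"
      using that(2) unfolding subset.chain_def by blast+
    have "ba_filter (\<Union>C)" using chain_union_filter[OF that(1)] c unfolding S_def by blast
    moreover have "F0 \<subseteq> \<Union>C" using c(1) that(1) unfolding S_def by blast
    moreover have "D_imp imp x (\<Union>C) \<subseteq> y"
    proof
      fix b assume "b \<in> D_imp imp x (\<Union>C)"
      then obtain a X where "X \<in> C" "a \<in> X" "imp a b \<in> x" unfolding D_imp_def by blast
      then have "b \<in> D_imp imp x X" unfolding D_imp_def by blast
      then show "b \<in> y" using c(1) \<open>X \<in> C\<close> unfolding S_def by blast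
    qed
    ultimately show ?thesis unfolding S_def by blast
  qed
  ultimately obtain M where M: "M \<in> S" and mx: "\<forall>X\<in>S. M \<subseteq> X \<longrightarrow> X = M"
    using subset_Zorn_nonempty[of S] by blast
  show ?thesis
    apply (rule exI[of _ M])
    using M mx unfolding S_def by blast
qed

lemma imp_mono2:
  assumes "conditional_algebra imp" "b \<le> c" shows "imp a b \<le> imp a c"
proof -
  have "imp a b = imp a (inf b c)" using assms(2) by (simp add: inf_absorb1)
  also have "\<dots> = inf (imp a b) (imp a c)" using assms(1) unfolding conditional_algebra_def by metis
  finally show ?thesis by (metis inf_le2)
qed

lemma imp_anti1:
  assumes "conditional_algebra imp" "a \<le> a'" shows "imp a' c \<le> imp a c"
proof -
  have "imp a' c = imp (sup a a') c" using assms(2) by (simp add: sup_absorb2)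
  also have "\<dots> \<le> inf (imp a c) (imp a' c)" using assms(1) unfolding conditional_algebra_def by metis
  finally show ?thesis by (metis inf_le1 order_trans)
qed

lemma Ul_uf: "u \<in> Ul \<longleftrightarrow> ultrafilter u" by (simp add: Ul_def)

lemma closed_Ul: "stone_closed Y \<Longrightarrow> Y \<subseteq> Ul" unfolding stone_closed_def phiF_def by blast

lemma theta_iff: "Y \<subseteq> Ul \<Longrightarrow> (a, b) \<in> theta Y \<longleftrightarrow> (\<forall>u\<in>Y. a \<in> u \<longleftrightarrow> b \<in> u)"
  unfolding theta_def phi_def by blast

lemma key:
  assumes ca: "conditional_algebra imp" and Yc: "stone_closed Y" and T: "T_closed imp Y"
    and ab: "(a, b) \<in> theta Y" and cd: "(c, d) \<in> theta Y" and x: "x \<in> Y"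
    and ac: "imp a c \<in> x"
  shows "imp b d \<in> x"
proof (rule ccontr)
  assume nbd: "imp b d \<notin> x"
  have YU: "Y \<subseteq> Ul" using closed_Ul[OF Yc] .
  have xu: "ultrafilter x" using x YU Ul_uf by blast
  have xf: "ba_filter x" using uf_filter[OF xu] .
  define H where "H = {e. imp b e \<in> x}"
  have Hf: "ba_filter H" unfolding ba_filter_def H_def
  proof (intro conjI ballI allI impI; simp)
    show "imp b top \<in> x" using ca filter_top[OF xf] unfolding conditional_algebra_def by simp
  next
    fix e1 e2 assume "imp b e1 \<in> x" "imp b e2 \<in> x"
    then have "inf (imp b e1) (imp b e2) \<in> x" using filter_inf[OF xf] by blast
    then show "imp b (inf e1 e2) \<in> x" using ca unfolding conditional_algebra_def by metis
  next
    fix e1 e2 assume "imp b e1 \<in> x" "e1 \<le> e2"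
    then show "imp b e2 \<in> x" using imp_mono2[OF ca] filter_up[OF xf] by blast
  qed
  have "d \<notin> H" using nbd H_def by simp
  then obtain y where yu: "ultrafilter y" "H \<subseteq> y" "d \<notin> y" using uf_exists[OF Hf] by blast
  define F0 where "F0 = {e. b \<le> e}"
  have F0f: "ba_filter F0" unfolding F0_def ba_filter_def by auto
  have "D_imp imp x F0 \<subseteq> H"
  proof
    fix e assume "e \<in> D_imp imp x F0"
    then obtain f where "b \<le> f" "imp f e \<in> x" unfolding D_imp_def F0_def by blast
    then show "e \<in> H" unfolding H_def using imp_anti1[OF ca] filter_up[OF xf] by blast
  qed
  then have "D_imp imp x F0 \<subseteq> y" using yu by blast
  then obtain F where F: "ba_filter F" "F0 \<subseteq> F" "D_imp imp x F \<subseteq> y"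
    and mx: "\<forall>F'. ba_filter F' \<and> F \<subseteq> F' \<and> D_imp imp x F' \<subseteq> y \<longrightarrow> F' = F"
    using max_filter[OF F0f] by blast
  define Z where "Z = phiF F"
  have ZC: "Z \<in> C_set imp x y" unfolding C_set_def stone_closed_def T_A_def Z_def using F by blast
  have "minimal_in Z (C_set imp x y)" unfolding minimal_in_def
  proof (intro conjI ballI impI)
    show "Z \<in> C_set imp x y" by (rule ZC)
    fix W assume W: "W \<in> C_set imp x y" "W \<subseteq> Z"
    then obtain F' where F': "ba_filter F'" "W = phiF F'" "D_imp imp x F' \<subseteq> y"
      unfolding C_set_def T_A_def by blast
    have "F \<subseteq> F'"
    proof
      fix f assume "f \<in> F"
      have "phiF F' \<subseteq> phi f" using W(2) F'(2) \<open>f \<in> F\<close> unfolding Z_def phiF_def phi_def by blast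
      then show "f \<in> F'" using reflect[OF F'(1)] by blast
    qed
    then have "F' = F" using mx F' by blast
    then show "W = Z" using F'(2) Z_def by simp
  qed
  moreover have "x \<in> Ul" "y \<in> Ul" using x YU yu Ul_uf by blast+
  ultimately have ZY: "Z \<subseteq> Y" and yY: "y \<in> Y" using T x unfolding T_closed_def by blast+
  have "phiF F \<subseteq> phi a"
  proof
    fix u assume u: "u \<in> phiF F"
    then have "u \<in> Y" using ZY Z_def by blast
    moreover have "b \<in> u" using u F(2) unfolding phiF_def F0_def by blast
    ultimately have "a \<in> u" using ab theta_iff[OF YU] by blast
    then show "u \<in> phi a" using u unfolding phi_def phiF_def by blast
  qed
  then have "a \<in> F" using reflect[OF F(1)] by blast
  then have "c \<in> y" using ac F(3) unfolding D_imp_def by blast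
  then have "d \<in> y" using cd yY theta_iff[OF YU] by blast
  then show False using yu by blast
qed

theorem theorem8p3:
  fixes imp :: "'a::boolean_algebra \<Rightarrow> 'a \<Rightarrow> 'a" and Y :: "'a set set"
  assumes "conditional_algebra imp"
    and "stone_closed Y"
  shows "ca_congruence imp (theta Y) \<longleftrightarrow> T_closed imp Y"
proof
  have YU: "Y \<subseteq> Ul" using closed_Ul[OF assms(2)] .
  have uY: "ultrafilter u" if "u \<in> Y" for u using that YU Ul_uf by blast
  assume T: "T_closed imp Y"
  show "ca_congruence imp (theta Y)"
    unfolding ca_congruence_def
  proof (intro conjI allI impI)
    show "equiv UNIV (theta Y)"
      unfolding equiv_def refl_on_def sym_def trans_def theta_def by auto
  next
    fix a b c d assume h: "(a, b) \<in> theta Y \<and> (c, d) \<in> theta Y"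
    then have h1: "\<forall>u\<in>Y. a \<in> u \<longleftrightarrow> b \<in> u" and h2: "\<forall>u\<in>Y. c \<in> u \<longleftrightarrow> d \<in> u"
      using theta_iff[OF YU] by blast+
    show "(inf a c, inf b d) \<in> theta Y" unfolding theta_iff[OF YU]
    proof
      fix u assume u: "u \<in> Y"
      show "inf a c \<in> u \<longleftrightarrow> inf b d \<in> u"
        using filter_inf_iff[OF uf_filter[OF uY[OF u]]] h1 h2 u by simp
    qed
    show "(sup a c, sup b d) \<in> theta Y" unfolding theta_iff[OF YU]
    proof
      fix u assume u: "u \<in> Y"
      show "sup a c \<in> u \<longleftrightarrow> sup b d \<in> u"
        using uf_sup[OF uY[OF u]] h1 h2 u by simp
    qed
    have hs: "(b, a) \<in> theta Y" "(d, c) \<in> theta Y" unfolding theta_iff[OF YU] using h1 h2 by blast+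
    show "(imp a c, imp b d) \<in> theta Y" unfolding theta_iff[OF YU]
    proof
      fix u assume u: "u \<in> Y"
      show "imp a c \<in> u \<longleftrightarrow> imp b d \<in> u"
        using key[OF assms T _ _ u] h hs by blast
    qed
  next
    fix a b assume "(a, b) \<in> theta Y"
    then have h1: "\<forall>u\<in>Y. a \<in> u \<longleftrightarrow> b \<in> u" using theta_iff[OF YU] by blast
    show "(- a, - b) \<in> theta Y" unfolding theta_iff[OF YU]
    proof
      fix u assume u: "u \<in> Y"
      show "- a \<in> u \<longleftrightarrow> - b \<in> u" using uf_compl[OF uY[OF u]] h1 u by simp
    qed
  qed
next
  have YU: "Y \<subseteq> Ul" using closed_Ul[OF assms(2)] .
  have uY: "ultrafilter u" if "u \<in> Y" for u using that YU Ul_uf by blast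
  assume C: "ca_congruence imp (theta Y)"
  have cimp: "(imp a c, imp b d) \<in> theta Y" if "(a, b) \<in> theta Y" "(c, d) \<in> theta Y" for a b c d
    using C that unfolding ca_congruence_def by blast
  have refl: "(e, e) \<in> theta Y" for e unfolding theta_def by simp
  obtain G where G: "ba_filter G" "Y = phiF G" using assms(2) unfolding stone_closed_def by blast
  show "T_closed imp Y" unfolding T_closed_def
  proof (intro conjI ballI allI impI)
    show "stone_closed Y" by (rule assms(2))
    fix x y Z assume xy: "x \<in> Ul" "y \<in> Ul" and h: "x \<in> Y \<and> minimal_in Z (C_set imp x y)"
    have xf: "ba_filter x" using h uY uf_filter by meson
    obtain F where F: "ba_filter F" "Z = phiF F" "D_imp imp x F \<subseteq> y"
      using h unfolding minimal_in_def C_set_def T_A_def by blast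
    have mn: "\<forall>W\<in>C_set imp x y. W \<subseteq> Z \<longrightarrow> W = Z" using h unfolding minimal_in_def by blast
    show "y \<in> Y"
    proof -
      have "g \<in> y" if "g \<in> G" for g
      proof -
        have "(top, g) \<in> theta Y" unfolding theta_iff[OF YU]
        proof
          fix u assume u: "u \<in> Y"
          have "g \<in> u" using u G(2) that unfolding phiF_def by blast
          then show "top \<in> u \<longleftrightarrow> g \<in> u" using filter_top[OF uf_filter[OF uY[OF u]]] by simp
        qed
        then have "(imp top top, imp top g) \<in> theta Y" using cimp refl by blast
        moreover have "imp top top \<in> x" using assms(1) filter_top[OF xf] unfolding conditional_algebra_def by simp
        ultimately have "imp top g \<in> x" using h theta_iff[OF YU] by blast
        then show "g \<in> y" using F(3) filter_top[OF F(1)] unfolding D_imp_def by blast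
      qed
      then show ?thesis using G xy unfolding phiF_def by blast
    qed
    define F' where "F' = {e. \<exists>f\<in>F. \<exists>g\<in>G. inf f g \<le> e}"
    have F'f: "ba_filter F'" unfolding ba_filter_def
    proof (intro conjI ballI allI impI)
      have "inf top top \<le> (top::'a)" by simp
      then show "top \<in> F'" using filter_top[OF F(1)] filter_top[OF G(1)] unfolding F'_def by blast
    next
      fix a b assume "a \<in> F'" "b \<in> F'"
      then obtain f1 g1 f2 g2 where m: "f1 \<in> F" "g1 \<in> G" "inf f1 g1 \<le> a" "f2 \<in> F" "g2 \<in> G" "inf f2 g2 \<le> b"
        unfolding F'_def by blast
      have 1: "inf (inf f1 f2) (inf g1 g2) \<le> inf f1 g1" by (rule inf_mono) simp_all
      have 2: "inf (inf f1 f2) (inf g1 g2) \<le> inf f2 g2" by (rule inf_mono) simp_all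
      have "inf (inf f1 f2) (inf g1 g2) \<le> inf a b"
        using le_infI[OF order_trans[OF 1 m(3)] order_trans[OF 2 m(6)]] .
      then show "inf a b \<in> F'" using filter_inf[OF F(1) m(1,4)] filter_inf[OF G(1) m(2,5)]
        unfolding F'_def by blast
    next
      fix a b assume "a \<in> F'" "a \<le> b"
      then show "b \<in> F'" unfolding F'_def using order_trans by blast
    qed
    have FF': "F \<subseteq> F'"
    proof
      fix f assume "f \<in> F"
      moreover have "inf f top \<le> f" by simp
      ultimately show "f \<in> F'" using filter_top[OF G(1)] unfolding F'_def by blast
    qed
    have GF': "G \<subseteq> F'"
    proof
      fix g assume "g \<in> G"
      moreover have "inf top g \<le> g" by simp
      ultimately show "g \<in> F'" using filter_top[OF F(1)] unfolding F'_def by blast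
    qed
    have DF': "D_imp imp x F' \<subseteq> y"
    proof
      fix e assume "e \<in> D_imp imp x F'"
      then obtain f' f g where m: "f \<in> F" "g \<in> G" "inf f g \<le> f'" "imp f' e \<in> x"
        unfolding D_imp_def F'_def by blast
      have "imp (inf f g) e \<in> x" using imp_anti1[OF assms(1) m(3)] m(4) filter_up[OF xf] by blast
      moreover have "(inf f g, f) \<in> theta Y" unfolding theta_iff[OF YU]
      proof
        fix u assume "u \<in> Y"
        have "g \<in> u" using \<open>u \<in> Y\<close> G(2) m(2) unfolding phiF_def by blast
        then show "inf f g \<in> u \<longleftrightarrow> f \<in> u" using filter_inf_iff[OF uf_filter[OF uY[OF \<open>u \<in> Y\<close>]]] by blast
      qed
      then have "(imp (inf f g) e, imp f e) \<in> theta Y" using cimp refl by blast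
      ultimately have "imp f e \<in> x" using h theta_iff[OF YU] by blast
      then show "e \<in> y" using F(3) m(1) unfolding D_imp_def by blast
    qed
    have "phiF F' \<in> C_set imp x y" unfolding C_set_def stone_closed_def T_A_def using F'f DF' by blast
    moreover have "phiF F' \<subseteq> Z" using F(2) FF' unfolding phiF_def by blast
    ultimately have "phiF F' = Z" using mn by blast
    then show "Z \<subseteq> Y" using GF' G(2) unfolding phiF_def by blast
  qed
qed
end
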